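(* Let $R$ be a monad on Sets and $LM$ a left $R$-module with values in Sets. Let $C\subset\coprod_{n}\prod_{i=0}^{n-1}LM([i])$, $\widetilde C\subset\coprod_n(\prod_{i=0}^nLM([i]))\times R([n])$, $Ceq\subset\coprod_n(\prod_{i=0}^{n-1}LM([i]))\times LM([n])^2$ and $\widetilde{Ceq}\subset\coprod_n(\prod_{i=0}^nLM([i]))\times R([n])^2$ be subsets satisfying the following conditions, for all sequences and elements for which the expressions are well formed (with $i=l(\Gamma_1)$ and $n=l(\Gamma)$): (1) $C,\widetilde C$ satisfy: (1.1) $(\rhd)$; (1.2) $(\Gamma,T\rhd)\Rightarrow(\Gamma\rhd)$; (1.3) $(\Gamma\vdash r:R)\Rightarrow(\Gamma,R\rhd)$; (1.4) $(\Gamma,T\rhd)\wedge(\Gamma,\Delta\vdash r:R)\Rightarrow(\Gamma,T,t_{n+1}\Delta\vdash t_{n+1}r:t_{n+1}R)$; (1.5) $(\Gamma\vdash s:S)\wedge(\Gamma,S,\Delta\vdash r:R)\Rightarrow(\Gamma,s_{n+1}(\Delta[s/n+1])\vdash s_{n+1}(r[s/n+1]):s_{n+1}(R[s/n+1]))$; (1.6) $(\Gamma,T\rhd)\Rightarrow(\Gamma,T\vdash n+1:t_{n+1}T)$; (2a) $(\Gamma\vdash T=T')\Rightarrow(\Gamma,T\rhd)$; (2b) $(\Gamma,T\rhd)\Rightarrow(\Gamma\vdash T=T)$; (2c) $(\Gamma\vdash T=T')\Rightarrow(\Gamma\vdash T'=T)$; (2d) $(\Gamma\vdash T=T')\wedge(\Gamma\vdash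 T'=T'')\Rightarrow(\Gamma\vdash T=T'')$; (3a) $(\Gamma\vdash o=o':T)\Rightarrow(\Gamma\vdash o:T)$; (3b) $(\Gamma\vdash o:T)\Rightarrow(\Gamma\vdash o=o:T)$; (3c) $(\Gamma\vdash o=o':T)\Rightarrow(\Gamma\vdash o'=o:T)$; (3d) $(\Gamma\vdash o=o':T)\wedge(\Gamma\vdash o'=o'':T)\Rightarrow(\Gamma\vdash o=o'':T)$; (4a) $(\Gamma_1\vdash T=T')\wedge(\Gamma_1,T,\Gamma_2\vdash S=S')\Rightarrow(\Gamma_1,T',\Gamma_2\vdash S=S')$; (4b) $(\Gamma_1\vdash T=T')\wedge(\Gamma_1,T,\Gamma_2\vdash o=o':S)\Rightarrow(\Gamma_1,T',\Gamma_2\vdash o=o':S)$; (4c) $(\Gamma\vdash S=S')\wedge(\Gamma\vdash o=o':S)\Rightarrow(\Gamma\vdash o=o':S')$; (5a) $(\Gamma_1,T\rhd)\wedge(\Gamma_1,\Gamma_2\vdash S=S')\Rightarrow(\Gamma_1,T,t_{i+1}\Gamma_2\vdash t_{i+1}S=t_{i+1}S')$; (5b) $(\Gamma_1,T\rhd)\wedge(\Gamma_1,\Gamma_2\vdash o=o':S)\Rightarrow(\Gamma_1,T,t_{i+1}\Gamma_2\vdash t_{i+1}o=t_{i+1}o':t_{i+1}S)$; (6a) $(\Gamma_1,T,\Gamma_2\vdash S=S')\wedge(\Gamma_1\vdash r:T)\Rightarrow(\Gamma_1,s_{i+1}(\Gamma_2[r/i+1])\vdash s_{i+1}(S[r/i+1])=s_{i+1}(S'[r/i+1]))$;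 (6b) $(\Gamma_1,T,\Gamma_2\vdash o=o':S)\wedge(\Gamma_1\vdash r:T)\Rightarrow(\Gamma_1,s_{i+1}(\Gamma_2[r/i+1])\vdash s_{i+1}(o[r/i+1])=s_{i+1}(o'[r/i+1]):s_{i+1}(S[r/i+1]))$; (7a) $(\Gamma_1,T,\Gamma_2,S\rhd)\wedge(\Gamma_1\vdash r=r':T)\Rightarrow(\Gamma_1,s_{i+1}(\Gamma_2[r/i+1])\vdash s_{i+1}(S[r/i+1])=s_{i+1}(S[r'/i+1]))$; (7b) $(\Gamma_1,T,\Gamma_2\vdash o:S)\wedge(\Gamma_1\vdash r=r':T)\Rightarrow(\Gamma_1,s_{i+1}(\Gamma_2[r/i+1])\vdash s_{i+1}(o[r/i+1])=s_{i+1}(o[r'/i+1]):s_{i+1}(S[r/i+1]))$. Then the relations $\sim$ on $C$ and $\simeq$ on $\widetilde C$ defined below are equivalence relations which form a regular congruence relation on the C-subsystem of $CC(R,LM)$ determined by $(C,\widetilde C)$, i.e. they satisfy conditions (a)–(f) listed below.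
   Context: Notation: $[n]=\{1,\dots,n\}$. $R$ is a monad on Sets (unit $\eta$, Kleisli extension $\mathrm{bind}$, monad laws $\mathrm{bind}(\eta_X)=\mathrm{id}$, $\mathrm{bind}(f)\circ\eta_X=f$, $\mathrm{bind}(\mathrm{bind}(g)\circ f)=\mathrm{bind}(g)\circ\mathrm{bind}(f)$); $LM$ is a left $R$-module: functor with $\rho(f):LM(X)\to LM(Y)$ for $f:X\to R(Y)$, $\rho(\eta_X)=\mathrm{id}$, $\rho(g)\circ\rho(f)=\rho(\mathrm{bind}(g)\circ f)$. Elements of $Y$ are regarded in $R(Y)$ via $\eta_Y$; $E(f_1/1,\dots,f_m/m)$ is $\rho(f)(E)$ (for $E\in LM([m])$) or $\mathrm{bind}(f)(E)$ (for $E\in R([m])$), $f(i)=f_i$. For $E\in LM([m])$ or $R([m])$, $m\ge n$: $t_{n+1}E:=E(1/1,\dots,n/n,n+2/n+1,\dots,m+1/m)$; for $m\ge n+1$, $s\in R([n])$: $s_{n+1}(E[s/n+1]):=E(1/1,\dots,n/n,s/n+1,n+1/n+2,\dots,m-1/m)$ (an element of $LM([m-1])$ resp. $R([m-1])$). These are applied componentwise to sequences $\Delta=(D_1,\dots,D_k)$. Judgement notation: contexts are sequences $\Gamma=(T_1,\dots,T_n)$ with $T_j\in LM([j-1])$, $l(\Gamma)=n$, $ft(T_1,\dots,T_n)=(T_1,\dots,T_{n-1})$; commas denote concatenation. $(\Gamma\rhd)$ means $\Gamma\in C$; $(\Gamma\vdash t:T)$ ($T\in LM([n])$, $t\in R([n])$)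 means $(\Gamma,T,t)\in\widetilde C$; $(\Gamma\vdash S=S')$ ($S,S'\in LM([n])$) means $(\Gamma,S,S')\in Ceq$; $(\Gamma\vdash o=o':S)$ ($o,o'\in R([n])$) means $(\Gamma,S,o,o')\in\widetilde{Ceq}$. For $\mathcal J=(\Gamma\vdash t:T)\in\widetilde C$, $\partial(\mathcal J)=(\Gamma,T)$. Relations: for $\Gamma=(T_1,\dots,T_n),\Gamma'=(T'_1,\dots,T'_n)\in C$ (same length), $\Gamma\sim\Gamma'$ iff $n=0$, or $ft(\Gamma)\sim ft(\Gamma')$ and $(T_1,\dots,T_{n-1}\vdash T_n=T'_n)$ (defined recursively; sequences of different lengths are not related). For $(\Gamma\vdash o:S),(\Gamma'\vdash o':S')\in\widetilde C$: $(\Gamma\vdash o:S)\simeq(\Gamma'\vdash o':S')$ iff $(\Gamma,S)\sim(\Gamma',S')$ and $(\Gamma\vdash o=o':S)$. Operations of $CC(R,LM)$ (with $n=l(\Gamma)$): $T((\Gamma,T),(\Gamma,\Delta))=(\Gamma,T,t_{n+1}\Delta)$; $\widetilde T((\Gamma,T),(\Gamma,\Delta\vdash r:R))=(\Gamma,T,t_{n+1}\Delta\vdash t_{n+1}r:t_{n+1}R)$; $S((\Gamma\vdash s:S),(\Gamma,S,\Delta))=(\Gamma,s_{n+1}(\Delta[s/n+1]))$; $\widetilde S((\Gamma\vdash s:S),(\Gamma,S,\Delta\vdash r:R))=(\Gamma,s_{n+1}(\Delta[s/n+1])\vdash s_{n+1}(r[s/n+1]):s_{n+1}(R[s/n+1]))$;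 $\delta(\Gamma,T)=(\Gamma,T\vdash n+1:t_{n+1}T)$. Regular congruence conditions for relations $\sim$ on $C$, $\simeq$ on $\widetilde C$: (a) both are equivalence relations; (b) $\Gamma\sim\Gamma'$ implies $l(\Gamma)=l(\Gamma')$ and $ft(\Gamma)\sim ft(\Gamma')$; (c) $\mathcal J\simeq\mathcal J'$ implies $\partial\mathcal J\sim\partial\mathcal J'$; (d) if $(\Gamma,T)\in C$, $\Gamma'\in C$ and $\Gamma\sim\Gamma'$, then there is $(\Gamma',T')\in C$ with $(\Gamma,T)\sim(\Gamma',T')$; (e) if $\mathcal J\in\widetilde C$, $F\in C$ and $\partial\mathcal J\sim F$, then there is $\mathcal J'\in\widetilde C$ with $\partial\mathcal J'=F$ and $\mathcal J\simeq\mathcal J'$; (f) $\sim,\simeq$ are compatible with $T,\widetilde T,S,\widetilde S,\delta$: whenever the arguments lie in $C$/$\widetilde C$, are pairwise related by $\sim$/$\simeq$, and both applications are defined, the results are related by $\sim$ (for $T,S$) or $\simeq$ (for $\widetilde T,\widetilde S,\delta$). *)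

theory Defs
  imports Main
begin

text \<open>
  Monad R on Sets and left R-module LM, restricted to the standard finite sets
  [n] = {1..n}.  R([n]) is the carrier set RR n of elements of type 'r,
  LM([n]) is the carrier set LL n of elements of type 'l.
  eta k i  = eta_[k](i) in R([k])  (for i in [k]);
  bnd m k f x = bind(f)(x) for f : [m] -> R([k]) and x in R([m]);
  rho m k f E = rho(f)(E) for f : [m] -> R([k]) and E in LM([m]).
  Maps [m] -> R([k]) are represented as functions nat => 'r, only their values
  on {1..m} matter (extensionality).
\<close>

definition fin_monad ::
  "(nat \<Rightarrow> 'r set) \<Rightarrow> (nat \<Rightarrow> nat \<Rightarrow> 'r) \<Rightarrow>
   (nat \<Rightarrow> nat \<Rightarrow> (nat \<Rightarrow> 'r) \<Rightarrow> 'r \<Rightarrow> 'r) \<Rightarrow> bool" where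
  "fin_monad RR eta bnd \<longleftrightarrow>
     (\<forall>k i. i \<in> {1..k} \<longrightarrow> eta k i \<in> RR k) \<and>
     (\<forall>m k f x. (\<forall>j\<in>{1..m}. f j \<in> RR k) \<longrightarrow> x \<in> RR m \<longrightarrow> bnd m k f x \<in> RR k) \<and>
     (\<forall>m k f g x. (\<forall>i\<in>{1..m}. f i = g i) \<longrightarrow> x \<in> RR m \<longrightarrow> bnd m k f x = bnd m k g x) \<and>
     (\<forall>m x. x \<in> RR m \<longrightarrow> bnd m m (eta m) x = x) \<and>
     (\<forall>m k f i. (\<forall>j\<in>{1..m}. f j \<in> RR k) \<longrightarrow> i \<in> {1..m} \<longrightarrow> bnd m k f (eta m i) = f i) \<and>
     (\<forall>m k l f g x. (\<forall>j\<in>{1..m}. f j \<in> RR k) \<longrightarrow> (\<forall>j\<in>{1..k}. g j \<in> RR l) \<longrightarrow> x \<in> RR m \<longrightarrow>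
        bnd m l (\<lambda>i. bnd k l g (f i)) x = bnd k l g (bnd m k f x))"

definition fin_lmodule ::
  "(nat \<Rightarrow> 'r set) \<Rightarrow> (nat \<Rightarrow> nat \<Rightarrow> 'r) \<Rightarrow>
   (nat \<Rightarrow> nat \<Rightarrow> (nat \<Rightarrow> 'r) \<Rightarrow> 'r \<Rightarrow> 'r) \<Rightarrow>
   (nat \<Rightarrow> 'l set) \<Rightarrow> (nat \<Rightarrow> nat \<Rightarrow> (nat \<Rightarrow> 'r) \<Rightarrow> 'l \<Rightarrow> 'l) \<Rightarrow> bool" where
  "fin_lmodule RR eta bnd LL rho \<longleftrightarrow>
     (\<forall>m k f E. (\<forall>j\<in>{1..m}. f j \<in> RR k) \<longrightarrow> E \<in> LL m \<longrightarrow> rho m k f E \<in> LL k) \<and>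
     (\<forall>m k f g E. (\<forall>i\<in>{1..m}. f i = g i) \<longrightarrow> E \<in> LL m \<longrightarrow> rho m k f E = rho m k g E) \<and>
     (\<forall>m E. E \<in> LL m \<longrightarrow> rho m m (eta m) E = E) \<and>
     (\<forall>m k l f g E. (\<forall>j\<in>{1..m}. f j \<in> RR k) \<longrightarrow> (\<forall>j\<in>{1..k}. g j \<in> RR l) \<longrightarrow> E \<in> LL m \<longrightarrow>
        rho k l g (rho m k f E) = rho m l (\<lambda>i. bnd k l g (f i)) E)"

(* t_{n+1}E for E in LM([m]) / R([m]), m >= n *)
definition wkL where
  "wkL eta rho n m E = rho m (Suc m) (\<lambda>i. eta (Suc m) (if i \<le> n then i else Suc i)) E"
definition wkR where
  "wkR eta bnd n m E = bnd m (Suc m) (\<lambda>i. eta (Suc m) (if i \<le> n then i else Suc i)) E"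

(* the map [m] -> R([m-1]) : i |-> i (i<=n), s (i=n+1), i-1 (i>n+1);
   s in R([n]) is regarded in R([m-1]) via the inclusion [n] \<subseteq> [m-1] *)
definition sub_map where
  "sub_map eta bnd n s m = (\<lambda>i. if i \<le> n then eta (m - 1) i
       else if i = Suc n then bnd n (m - 1) (eta (m - 1)) s else eta (m - 1) (i - 1))"

(* s_{n+1}(E[s/n+1]) for E in LM([m]) / R([m]), m >= n+1, s in R([n]) *)
definition substL where
  "substL eta bnd rho n s m E = rho m (m - 1) (sub_map eta bnd n s m) E"
definition substR where
  "substR eta bnd n s m E = bnd m (m - 1) (sub_map eta bnd n s m) E"

(* componentwise on a sequence Delta following a context of length n:
   in (Gamma, Delta) the j-th (0-based) entry of Delta lies in LM([n+j]) *)
definition wkLs where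
  "wkLs eta rho n D = map (\<lambda>j. wkL eta rho n (n + j) (D ! j)) [0..<length D]"
(* in (Gamma, S, Delta) the j-th (0-based) entry of Delta lies in LM([n+1+j]) *)
definition substLs where
  "substLs eta bnd rho n s D = map (\<lambda>j. substL eta bnd rho n s (Suc n + j) (D ! j)) [0..<length D]"

(* (T_1,...,T_n) with T_j in LM([j-1]) *)
definition wfctx :: "(nat \<Rightarrow> 'l set) \<Rightarrow> 'l list \<Rightarrow> bool" where
  "wfctx LL G \<longleftrightarrow> (\<forall>j<length G. G ! j \<in> LL j)"

definition judgement_sets_typed where
  "judgement_sets_typed RR LL C Ct Ceq Cteq \<longleftrightarrow>
     C \<subseteq> {G. wfctx LL G} \<and>
     Ct \<subseteq> {(G, T, t). wfctx LL G \<and> T \<in> LL (length G) \<and> t \<in> RR (length G)} \<and>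
     Ceq \<subseteq> {(G, S, S'). wfctx LL G \<and> S \<in> LL (length G) \<and> S' \<in> LL (length G)} \<and>
     Cteq \<subseteq> {(G, S, x, y). wfctx LL G \<and> S \<in> LL (length G) \<and> x \<in> RR (length G) \<and> y \<in> RR (length G)}"

text \<open>Judgements: (G \<rhd>) is G \<in> C; (G |- t : T) is (G,T,t) \<in> Ct;
  (G |- S = S') is (G,S,S') \<in> Ceq; (G |- x = y : S) is (G,S,x,y) \<in> Cteq.\<close>

definition cond1 where
  "cond1 RR eta bnd LL rho C Ct \<longleftrightarrow>
     [] \<in> C \<and>
     (\<forall>G T. G @ [T] \<in> C \<longrightarrow> G \<in> C) \<and>
     (\<forall>G R r. (G, R, r) \<in> Ct \<longrightarrow> G @ [R] \<in> C) \<and>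
     (\<forall>G T D R r. G @ [T] \<in> C \<longrightarrow> (G @ D, R, r) \<in> Ct \<longrightarrow>
        (G @ [T] @ wkLs eta rho (length G) D,
         wkL eta rho (length G) (length G + length D) R,
         wkR eta bnd (length G) (length G + length D) r) \<in> Ct) \<and>
     (\<forall>G S s D R r. (G, S, s) \<in> Ct \<longrightarrow> (G @ [S] @ D, R, r) \<in> Ct \<longrightarrow>
        (G @ substLs eta bnd rho (length G) s D,
         substL eta bnd rho (length G) s (Suc (length G) + length D) R,
         substR eta bnd (length G) s (Suc (length G) + length D) r) \<in> Ct) \<and>
     (\<forall>G T. G @ [T] \<in> C \<longrightarrow>
        (G @ [T], wkL eta rho (length G) (length G) T, eta (Suc (length G)) (Suc (length G))) \<in> Ct)"

definition cond2 where
  "cond2 C Ceq \<longleftrightarrow>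
     (\<forall>G T T'. (G, T, T') \<in> Ceq \<longrightarrow> G @ [T] \<in> C) \<and>
     (\<forall>G T. G @ [T] \<in> C \<longrightarrow> (G, T, T) \<in> Ceq) \<and>
     (\<forall>G T T'. (G, T, T') \<in> Ceq \<longrightarrow> (G, T', T) \<in> Ceq) \<and>
     (\<forall>G T T' T''. (G, T, T') \<in> Ceq \<longrightarrow> (G, T', T'') \<in> Ceq \<longrightarrow> (G, T, T'') \<in> Ceq)"

definition cond3 where
  "cond3 Ct Cteq \<longleftrightarrow>
     (\<forall>G T x y. (G, T, x, y) \<in> Cteq \<longrightarrow> (G, T, x) \<in> Ct) \<and>
     (\<forall>G T x. (G, T, x) \<in> Ct \<longrightarrow> (G, T, x, x) \<in> Cteq) \<and>
     (\<forall>G T x y. (G, T, x, y) \<in> Cteq \<longrightarrow> (G, T, y, x) \<in> Cteq) \<and>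
     (\<forall>G T x y z. (G, T, x, y) \<in> Cteq \<longrightarrow> (G, T, y, z) \<in> Cteq \<longrightarrow> (G, T, x, z) \<in> Cteq)"

definition cond4 where
  "cond4 Ceq Cteq \<longleftrightarrow>
     (\<forall>G1 T T' G2 S S'. (G1, T, T') \<in> Ceq \<longrightarrow> (G1 @ [T] @ G2, S, S') \<in> Ceq \<longrightarrow>
        (G1 @ [T'] @ G2, S, S') \<in> Ceq) \<and>
     (\<forall>G1 T T' G2 S x y. (G1, T, T') \<in> Ceq \<longrightarrow> (G1 @ [T] @ G2, S, x, y) \<in> Cteq \<longrightarrow>
        (G1 @ [T'] @ G2, S, x, y) \<in> Cteq) \<and>
     (\<forall>G S S' x y. (G, S, S') \<in> Ceq \<longrightarrow> (G, S, x, y) \<in> Cteq \<longrightarrow> (G, S', x, y) \<in> Cteq)"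

definition cond5 where
  "cond5 eta bnd rho C Ceq Cteq \<longleftrightarrow>
     (\<forall>G1 T G2 S S'. G1 @ [T] \<in> C \<longrightarrow> (G1 @ G2, S, S') \<in> Ceq \<longrightarrow>
        (G1 @ [T] @ wkLs eta rho (length G1) G2,
         wkL eta rho (length G1) (length G1 + length G2) S,
         wkL eta rho (length G1) (length G1 + length G2) S') \<in> Ceq) \<and>
     (\<forall>G1 T G2 S x y. G1 @ [T] \<in> C \<longrightarrow> (G1 @ G2, S, x, y) \<in> Cteq \<longrightarrow>
        (G1 @ [T] @ wkLs eta rho (length G1) G2,
         wkL eta rho (length G1) (length G1 + length G2) S,
         wkR eta bnd (length G1) (length G1 + length G2) x,
         wkR eta bnd (length G1) (length G1 + length G2) y) \<in> Cteq)"

definition cond6 where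
  "cond6 eta bnd rho Ct Ceq Cteq \<longleftrightarrow>
     (\<forall>G1 T G2 S S' r. (G1 @ [T] @ G2, S, S') \<in> Ceq \<longrightarrow> (G1, T, r) \<in> Ct \<longrightarrow>
        (G1 @ substLs eta bnd rho (length G1) r G2,
         substL eta bnd rho (length G1) r (Suc (length G1) + length G2) S,
         substL eta bnd rho (length G1) r (Suc (length G1) + length G2) S') \<in> Ceq) \<and>
     (\<forall>G1 T G2 S x y r. (G1 @ [T] @ G2, S, x, y) \<in> Cteq \<longrightarrow> (G1, T, r) \<in> Ct \<longrightarrow>
        (G1 @ substLs eta bnd rho (length G1) r G2,
         substL eta bnd rho (length G1) r (Suc (length G1) + length G2) S,
         substR eta bnd (length G1) r (Suc (length G1) + length G2) x,
         substR eta bnd (length G1) r (Suc (length G1) + length G2) y) \<in> Cteq)"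

definition cond7 where
  "cond7 eta bnd rho C Ct Ceq Cteq \<longleftrightarrow>
     (\<forall>G1 T G2 S r r'. G1 @ [T] @ G2 @ [S] \<in> C \<longrightarrow> (G1, T, r, r') \<in> Cteq \<longrightarrow>
        (G1 @ substLs eta bnd rho (length G1) r G2,
         substL eta bnd rho (length G1) r (Suc (length G1) + length G2) S,
         substL eta bnd rho (length G1) r' (Suc (length G1) + length G2) S) \<in> Ceq) \<and>
     (\<forall>G1 T G2 S x r r'. (G1 @ [T] @ G2, S, x) \<in> Ct \<longrightarrow> (G1, T, r, r') \<in> Cteq \<longrightarrow>
        (G1 @ substLs eta bnd rho (length G1) r G2,
         substL eta bnd rho (length G1) r (Suc (length G1) + length G2) S,
         substR eta bnd (length G1) r (Suc (length G1) + length G2) x,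
         substR eta bnd (length G1) r' (Suc (length G1) + length G2) x) \<in> Cteq)"

function ctx_sim :: "('l list \<times> 'l \<times> 'l) set \<Rightarrow> 'l list \<Rightarrow> 'l list \<Rightarrow> bool" where
  "ctx_sim Ceq G G' =
     (if G = [] \<or> G' = [] then G = [] \<and> G' = []
      else ctx_sim Ceq (butlast G) (butlast G') \<and> (butlast G, last G, last G') \<in> Ceq)"
  by auto
termination by (relation "measure (\<lambda>(_, G, _). length G)") auto

declare ctx_sim.simps [simp del]

definition ctx_rel where
  "ctx_rel C Ceq G G' \<longleftrightarrow> G \<in> C \<and> G' \<in> C \<and> ctx_sim Ceq G G'"

definition bdry :: "'l list \<times> 'l \<times> 'r \<Rightarrow> 'l list" where
  "bdry J = fst J @ [fst (snd J)]"

definition tm_rel where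
  "tm_rel C Ct Ceq Cteq J J' \<longleftrightarrow> J \<in> Ct \<and> J' \<in> Ct \<and> ctx_rel C Ceq (bdry J) (bdry J') \<and>
     (fst J, fst (snd J), snd (snd J), snd (snd J')) \<in> Cteq"

definition opT where
  "opT eta rho G T D = G @ [T] @ wkLs eta rho (length G) D"
definition opTt where
  "opTt eta bnd rho G T D R r =
     (G @ [T] @ wkLs eta rho (length G) D,
      wkL eta rho (length G) (length G + length D) R,
      wkR eta bnd (length G) (length G + length D) r)"
definition opS where
  "opS eta bnd rho G s D = G @ substLs eta bnd rho (length G) s D"
definition opSt where
  "opSt eta bnd rho G s D R r =
     (G @ substLs eta bnd rho (length G) s D,
      substL eta bnd rho (length G) s (Suc (length G) + length D) R,
      substR eta bnd (length G) s (Suc (length G) + length D) r)"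
definition opdelta where
  "opdelta eta rho G T = (G @ [T], wkL eta rho (length G) (length G) T, eta (Suc (length G)) (Suc (length G)))"

definition regular_congruence where
  "regular_congruence eta bnd rho C Ct sim tsim \<longleftrightarrow>
     \<comment> \<open>(a)\<close>
     equiv C {(G, G'). sim G G'} \<and> equiv Ct {(J, J'). tsim J J'} \<and>
     \<comment> \<open>(b)\<close>
     (\<forall>G G'. sim G G' \<longrightarrow> length G = length G' \<and> sim (butlast G) (butlast G')) \<and>
     \<comment> \<open>(c)\<close>
     (\<forall>J J'. tsim J J' \<longrightarrow> sim (bdry J) (bdry J')) \<and>
     \<comment> \<open>(d)\<close>
     (\<forall>G T G'. G @ [T] \<in> C \<longrightarrow> G' \<in> C \<longrightarrow> sim G G' \<longrightarrow>
        (\<exists>T'. G' @ [T'] \<in> C \<and> sim (G @ [T]) (G' @ [T']))) \<and>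
     \<comment> \<open>(e)\<close>
     (\<forall>J F. J \<in> Ct \<longrightarrow> F \<in> C \<longrightarrow> sim (bdry J) F \<longrightarrow>
        (\<exists>J'. J' \<in> Ct \<and> bdry J' = F \<and> tsim J J')) \<and>
     \<comment> \<open>(f) compatibility with T\<close>
     (\<forall>G T D G' T' D'. G @ [T] \<in> C \<longrightarrow> G @ D \<in> C \<longrightarrow> G' @ [T'] \<in> C \<longrightarrow> G' @ D' \<in> C \<longrightarrow>
        sim (G @ [T]) (G' @ [T']) \<longrightarrow> sim (G @ D) (G' @ D') \<longrightarrow>
        sim (opT eta rho G T D) (opT eta rho G' T' D')) \<and>
     \<comment> \<open>(f) compatibility with ~T\<close>
     (\<forall>G T D R r G' T' D' R' r'. G @ [T] \<in> C \<longrightarrow> (G @ D, R, r) \<in> Ct \<longrightarrow>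
        G' @ [T'] \<in> C \<longrightarrow> (G' @ D', R', r') \<in> Ct \<longrightarrow>
        sim (G @ [T]) (G' @ [T']) \<longrightarrow> tsim (G @ D, R, r) (G' @ D', R', r') \<longrightarrow>
        tsim (opTt eta bnd rho G T D R r) (opTt eta bnd rho G' T' D' R' r')) \<and>
     \<comment> \<open>(f) compatibility with S\<close>
     (\<forall>G S s D G' S' s' D'. (G, S, s) \<in> Ct \<longrightarrow> G @ [S] @ D \<in> C \<longrightarrow>
        (G', S', s') \<in> Ct \<longrightarrow> G' @ [S'] @ D' \<in> C \<longrightarrow>
        tsim (G, S, s) (G', S', s') \<longrightarrow> sim (G @ [S] @ D) (G' @ [S'] @ D') \<longrightarrow>
        sim (opS eta bnd rho G s D) (opS eta bnd rho G' s' D')) \<and>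
     \<comment> \<open>(f) compatibility with ~S\<close>
     (\<forall>G S s D R r G' S' s' D' R' r'. (G, S, s) \<in> Ct \<longrightarrow> (G @ [S] @ D, R, r) \<in> Ct \<longrightarrow>
        (G', S', s') \<in> Ct \<longrightarrow> (G' @ [S'] @ D', R', r') \<in> Ct \<longrightarrow>
        tsim (G, S, s) (G', S', s') \<longrightarrow> tsim (G @ [S] @ D, R, r) (G' @ [S'] @ D', R', r') \<longrightarrow>
        tsim (opSt eta bnd rho G s D R r) (opSt eta bnd rho G' s' D' R' r')) \<and>
     \<comment> \<open>(f) compatibility with delta\<close>
     (\<forall>G T G' T'. G @ [T] \<in> C \<longrightarrow> G' @ [T'] \<in> C \<longrightarrow> sim (G @ [T]) (G' @ [T']) \<longrightarrow>
        tsim (opdelta eta rho G T) (opdelta eta rho G' T'))"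

end

theory Submission
  imports Defs
begin

lemma sim_nil1[simp]: "ctx_sim Ceq [] G' \<longleftrightarrow> G' = []"
  by (subst ctx_sim.simps) auto
lemma sim_nil2[simp]: "ctx_sim Ceq G [] \<longleftrightarrow> G = []"
  by (subst ctx_sim.simps) auto
lemma sim_snoc[simp]: "ctx_sim Ceq (G @ [a]) (G' @ [a']) \<longleftrightarrow> ctx_sim Ceq G G' \<and> (G, a, a') \<in> Ceq"
  by (subst ctx_sim.simps) auto

lemma sim_char: "ctx_sim Ceq G G' \<longleftrightarrow> length G = length G' \<and> (\<forall>k<length G. (take k G, G!k, G'!k) \<in> Ceq)"
proof (induction G arbitrary: G' rule: rev_induct)
  case Nil then show ?case by auto
next
  case (snoc a G)
  show ?case
  proof (cases G' rule: rev_cases)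
    case Nil then show ?thesis by simp
  next
    case (snoc G'' a')
    have "(\<forall>k<length (G@[a]). (take k (G@[a]), (G@[a])!k, (G''@[a'])!k) \<in> Ceq) \<longleftrightarrow>
          (length G = length G'' \<longrightarrow> (\<forall>k<length G. (take k G, G!k, G''!k) \<in> Ceq) \<and> (G,a,a') \<in> Ceq)"
      if "length G = length G''"
      using that by (auto simp: nth_append less_Suc_eq)
    then show ?thesis using snoc snoc.IH[of G''] by auto
  qed
qed

lemma wkLs_len[simp]: "length (wkLs eta rho n D) = length D"
  by (simp add: wkLs_def)
lemma wkLs_nth[simp]: "j < length D \<Longrightarrow> wkLs eta rho n D ! j = wkL eta rho n (n+j) (D!j)"
  by (simp add: wkLs_def)
lemma wkLs_take: "take j (wkLs eta rho n D) = wkLs eta rho n (take j D)"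
  by (auto simp add: wkLs_def take_map min_def intro!: nth_equalityI)
lemma substLs_len[simp]: "length (substLs eta bnd rho n s D) = length D"
  by (simp add: substLs_def)
lemma substLs_nth[simp]: "j < length D \<Longrightarrow> substLs eta bnd rho n s D ! j = substL eta bnd rho n s (Suc n+j) (D!j)"
  by (simp add: substLs_def)
lemma substLs_take: "take j (substLs eta bnd rho n s D) = substLs eta bnd rho n s (take j D)"
  by (auto simp add: substLs_def take_map min_def intro!: nth_equalityI)

lemma wkLs_snoc: "wkLs eta rho n (D @ [R]) = wkLs eta rho n D @ [wkL eta rho n (n + length D) R]"
  by (auto simp: wkLs_def nth_append intro!: nth_equalityI)
lemma substLs_snoc: "substLs eta bnd rho n s (D @ [R]) = substLs eta bnd rho n s D @ [substL eta bnd rho n s (Suc n + length D) R]"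
  by (auto simp: substLs_def nth_append intro!: nth_equalityI)

locale sys =
  fixes RR :: "nat \<Rightarrow> 'r set"
    and eta :: "nat \<Rightarrow> nat \<Rightarrow> 'r"
    and bnd :: "nat \<Rightarrow> nat \<Rightarrow> (nat \<Rightarrow> 'r) \<Rightarrow> 'r \<Rightarrow> 'r"
    and LL :: "nat \<Rightarrow> 'l set"
    and rho :: "nat \<Rightarrow> nat \<Rightarrow> (nat \<Rightarrow> 'r) \<Rightarrow> 'l \<Rightarrow> 'l"
    and C :: "'l list set"
    and Ct :: "('l list \<times> 'l \<times> 'r) set"
    and Ceq :: "('l list \<times> 'l \<times> 'l) set"
    and Cteq :: "('l list \<times> 'l \<times> 'r \<times> 'r) set"
  assumes c1: "cond1 RR eta bnd LL rho C Ct"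
    and c2: "cond2 C Ceq"
    and c3: "cond3 Ct Cteq"
    and c4: "cond4 Ceq Cteq"
    and c5: "cond5 eta bnd rho C Ceq Cteq"
    and c6: "cond6 eta bnd rho Ct Ceq Cteq"
    and c7: "cond7 eta bnd rho C Ct Ceq Cteq"
begin

lemma nilC: "[] \<in> C" using c1 unfolding cond1_def by blast
lemma C_butlast: "G @ [T] \<in> C \<Longrightarrow> G \<in> C" using c1 unfolding cond1_def by blast
lemma Ct_C: "(G, R, r) \<in> Ct \<Longrightarrow> G @ [R] \<in> C" using c1 unfolding cond1_def by blast
lemma c14: "G @ [T] \<in> C \<Longrightarrow> (G @ D, R, r) \<in> Ct \<Longrightarrow>
        (G @ [T] @ wkLs eta rho (length G) D,
         wkL eta rho (length G) (length G + length D) R,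
         wkR eta bnd (length G) (length G + length D) r) \<in> Ct" using c1 unfolding cond1_def by blast
lemma c16: "G @ [T] \<in> C \<Longrightarrow>
        (G @ [T], wkL eta rho (length G) (length G) T, eta (Suc (length G)) (Suc (length G))) \<in> Ct"
  using c1 unfolding cond1_def by blast
lemma e2a: "(G, T, T') \<in> Ceq \<Longrightarrow> G @ [T] \<in> C" using c2 unfolding cond2_def by blast
lemma e2b: "G @ [T] \<in> C \<Longrightarrow> (G, T, T) \<in> Ceq" using c2 unfolding cond2_def by blast
lemma e2c: "(G, T, T') \<in> Ceq \<Longrightarrow> (G, T', T) \<in> Ceq" using c2 unfolding cond2_def by blast
lemma e2d: "(G, T, T') \<in> Ceq \<Longrightarrow> (G, T', T'') \<in> Ceq \<Longrightarrow> (G, T, T'') \<in> Ceq" using c2 unfolding cond2_def by blast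
lemma e3a: "(G, T, x, y) \<in> Cteq \<Longrightarrow> (G, T, x) \<in> Ct" using c3 unfolding cond3_def by blast
lemma e3b: "(G, T, x) \<in> Ct \<Longrightarrow> (G, T, x, x) \<in> Cteq" using c3 unfolding cond3_def by blast
lemma e3c: "(G, T, x, y) \<in> Cteq \<Longrightarrow> (G, T, y, x) \<in> Cteq" using c3 unfolding cond3_def by blast
lemma e3d: "(G, T, x, y) \<in> Cteq \<Longrightarrow> (G, T, y, z) \<in> Cteq \<Longrightarrow> (G, T, x, z) \<in> Cteq" using c3 unfolding cond3_def by blast
lemma e4a: "(G1, T, T') \<in> Ceq \<Longrightarrow> (G1 @ [T] @ G2, S, S') \<in> Ceq \<Longrightarrow> (G1 @ [T'] @ G2, S, S') \<in> Ceq"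
  using c4 unfolding cond4_def by blast
lemma e4b: "(G1, T, T') \<in> Ceq \<Longrightarrow> (G1 @ [T] @ G2, S, x, y) \<in> Cteq \<Longrightarrow> (G1 @ [T'] @ G2, S, x, y) \<in> Cteq"
  using c4 unfolding cond4_def by blast
lemma e4c: "(G, S, S') \<in> Ceq \<Longrightarrow> (G, S, x, y) \<in> Cteq \<Longrightarrow> (G, S', x, y) \<in> Cteq"
  using c4 unfolding cond4_def by blast
lemma e5a: "G1 @ [T] \<in> C \<Longrightarrow> (G1 @ G2, S, S') \<in> Ceq \<Longrightarrow>
        (G1 @ [T] @ wkLs eta rho (length G1) G2,
         wkL eta rho (length G1) (length G1 + length G2) S,
         wkL eta rho (length G1) (length G1 + length G2) S') \<in> Ceq"
  using c5 unfolding cond5_def by blast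
lemma e5b: "G1 @ [T] \<in> C \<Longrightarrow> (G1 @ G2, S, x, y) \<in> Cteq \<Longrightarrow>
        (G1 @ [T] @ wkLs eta rho (length G1) G2,
         wkL eta rho (length G1) (length G1 + length G2) S,
         wkR eta bnd (length G1) (length G1 + length G2) x,
         wkR eta bnd (length G1) (length G1 + length G2) y) \<in> Cteq"
  using c5 unfolding cond5_def by blast
lemma e6a: "(G1 @ [T] @ G2, S, S') \<in> Ceq \<Longrightarrow> (G1, T, r) \<in> Ct \<Longrightarrow>
        (G1 @ substLs eta bnd rho (length G1) r G2,
         substL eta bnd rho (length G1) r (Suc (length G1) + length G2) S,
         substL eta bnd rho (length G1) r (Suc (length G1) + length G2) S') \<in> Ceq"
  using c6 unfolding cond6_def by blast
lemma e6b: "(G1 @ [T] @ G2, S, x, y) \<in> Cteq \<Longrightarrow> (G1, T, r) \<in> Ct \<Longrightarrow>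
        (G1 @ substLs eta bnd rho (length G1) r G2,
         substL eta bnd rho (length G1) r (Suc (length G1) + length G2) S,
         substR eta bnd (length G1) r (Suc (length G1) + length G2) x,
         substR eta bnd (length G1) r (Suc (length G1) + length G2) y) \<in> Cteq"
  using c6 unfolding cond6_def by blast
lemma e7a: "G1 @ [T] @ G2 @ [S] \<in> C \<Longrightarrow> (G1, T, r, r') \<in> Cteq \<Longrightarrow>
        (G1 @ substLs eta bnd rho (length G1) r G2,
         substL eta bnd rho (length G1) r (Suc (length G1) + length G2) S,
         substL eta bnd rho (length G1) r' (Suc (length G1) + length G2) S) \<in> Ceq"
  using c7 unfolding cond7_def by blast
lemma e7b: "(G1 @ [T] @ G2, S, x) \<in> Ct \<Longrightarrow> (G1, T, r, r') \<in> Cteq \<Longrightarrow>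
        (G1 @ substLs eta bnd rho (length G1) r G2,
         substL eta bnd rho (length G1) r (Suc (length G1) + length G2) S,
         substR eta bnd (length G1) r (Suc (length G1) + length G2) x,
         substR eta bnd (length G1) r' (Suc (length G1) + length G2) x) \<in> Cteq"
  using c7 unfolding cond7_def by blast

lemma C_prefix: "G @ H \<in> C \<Longrightarrow> G \<in> C"
  by (induction H rule: rev_induct) (auto dest: C_butlast simp del: append_assoc simp: append_assoc[symmetric])

lemma sim_C: "ctx_sim Ceq X X' \<Longrightarrow> X \<in> C"
  by (cases X rule: rev_cases; cases X' rule: rev_cases) (auto simp: nilC intro: e2a)

lemma sim_refl: "X \<in> C \<Longrightarrow> ctx_sim Ceq X X"
  unfolding sim_char
proof (intro conjI allI impI refl)
  fix k assume X: "X \<in> C" and k: "k < length X"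
  have "take (Suc k) X = take k X @ [X!k]" using k by (simp add: take_Suc_conv_app_nth)
  moreover have "take (Suc k) X \<in> C" using X C_prefix[of "take (Suc k) X" "drop (Suc k) X"] by simp
  ultimately show "(take k X, X!k, X!k) \<in> Ceq" using e2b by metis
qed

lemma transp_eq: "ctx_sim Ceq G G' \<Longrightarrow> (G' @ D, S, S') \<in> Ceq \<Longrightarrow> (G @ D, S, S') \<in> Ceq"
proof (induction G arbitrary: G' D rule: rev_induct)
  case Nil then show ?case by simp
next
  case (snoc a G0)
  obtain G0' a' where G': "G' = G0' @ [a']" using snoc.prems by (cases G' rule: rev_cases) auto
  have s: "ctx_sim Ceq G0 G0'" and e: "(G0, a, a') \<in> Ceq" and h: "(G0' @ [a'] @ D, S, S') \<in> Ceq"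
    using snoc.prems G' by auto
  from snoc.IH[OF s, of "[a'] @ D"] h have "(G0 @ [a'] @ D, S, S') \<in> Ceq" by simp
  from e4a[OF e2c[OF e] this] show ?case by simp
qed

lemma transp_teq: "ctx_sim Ceq G G' \<Longrightarrow> (G' @ D, S, x, y) \<in> Cteq \<Longrightarrow> (G @ D, S, x, y) \<in> Cteq"
proof (induction G arbitrary: G' D rule: rev_induct)
  case Nil then show ?case by simp
next
  case (snoc a G0)
  obtain G0' a' where G': "G' = G0' @ [a']" using snoc.prems by (cases G' rule: rev_cases) auto
  have s: "ctx_sim Ceq G0 G0'" and e: "(G0, a, a') \<in> Ceq" and h: "(G0' @ [a'] @ D, S, x, y) \<in> Cteq"
    using snoc.prems G' by auto
  from snoc.IH[OF s, of "[a'] @ D"] h have "(G0 @ [a'] @ D, S, x, y) \<in> Cteq" by simp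
  from e4b[OF e2c[OF e] this] show ?case by simp
qed

lemma sim_sym: "ctx_sim Ceq X X' \<Longrightarrow> ctx_sim Ceq X' X"
proof (induction X arbitrary: X' rule: rev_induct)
  case Nil then show ?case by simp
next
  case (snoc a X)
  obtain Y b where Y: "X' = Y @ [b]" using snoc.prems by (cases X' rule: rev_cases) auto
  have s: "ctx_sim Ceq X Y" and e: "(X, a, b) \<in> Ceq" using snoc.prems Y by auto
  have s': "ctx_sim Ceq Y X" using snoc.IH[OF s] .
  have "(Y, b, a) \<in> Ceq" using transp_eq[OF s', of "[]"] e2c[OF e] by simp
  then show ?case using Y s' by simp
qed

lemma sim_trans: "ctx_sim Ceq X X' \<Longrightarrow> ctx_sim Ceq X' X'' \<Longrightarrow> ctx_sim Ceq X X''"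
proof (induction X arbitrary: X' X'' rule: rev_induct)
  case Nil then show ?case by simp
next
  case (snoc a X)
  obtain Y b where Y: "X' = Y @ [b]" using snoc.prems by (cases X' rule: rev_cases) auto
  obtain Z c where Z: "X'' = Z @ [c]" using snoc.prems Y by (cases X'' rule: rev_cases) auto
  have s1: "ctx_sim Ceq X Y" and e1: "(X, a, b) \<in> Ceq" using snoc.prems Y by auto
  have s2: "ctx_sim Ceq Y Z" and e2: "(Y, b, c) \<in> Ceq" using snoc.prems Y Z by auto
  have "(X, b, c) \<in> Ceq" using transp_eq[OF s1, of "[]"] e2 by simp
  then show ?case using snoc.IH[OF s1 s2] e1 e2d Z by auto
qed

lemma ctx_rel_iff: "ctx_rel C Ceq X X' \<longleftrightarrow> ctx_sim Ceq X X'"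
  unfolding ctx_rel_def using sim_C sim_sym by blast

lemma sim_len: "ctx_sim Ceq X X' \<Longrightarrow> length X = length X'"
  by (simp add: sim_char)

lemma tm_rel_iff: "tm_rel C Ct Ceq Cteq (G, S, x) (G', S', x') \<longleftrightarrow>
    ctx_sim Ceq (G @ [S]) (G' @ [S']) \<and> (G, S, x, x') \<in> Cteq" (is "?L \<longleftrightarrow> ?R")
proof
  assume ?R
  then have s: "ctx_sim Ceq G G'" and e: "(G, S, S') \<in> Ceq" and t: "(G, S, x, x') \<in> Cteq" by auto
  have s': "ctx_sim Ceq G' G" using sim_sym[OF s] .
  have "(G', S, x', x) \<in> Cteq" using transp_teq[OF s', of "[]"] e3c[OF t] by simp
  moreover have "(G', S, S') \<in> Ceq" using transp_eq[OF s', of "[]"] e by simp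
  ultimately have "(G', S', x', x) \<in> Cteq" using e4c by blast
  then show ?L using \<open>?R\<close> e3a[OF t] e3a unfolding tm_rel_def ctx_rel_iff bdry_def by auto
qed (auto simp: tm_rel_def ctx_rel_iff bdry_def)


lemma simT:
  assumes h1: "ctx_sim Ceq (G @ [T]) (G' @ [T'])" and h2: "ctx_sim Ceq (G @ D) (G' @ D')"
  shows "ctx_sim Ceq (G @ [T] @ wkLs eta rho (length G) D) (G' @ [T'] @ wkLs eta rho (length G') D')"
proof -
  have lG: "length G' = length G" using sim_len[OF h1] by simp
  have lD: "length D' = length D" using sim_len[OF h2] lG by simp
  have TC: "G @ [T] \<in> C" using sim_C[OF h1] .
  have c1: "\<forall>k<Suc (length G). (take k (G@[T]), (G@[T])!k, (G'@[T'])!k) \<in> Ceq"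
    using h1 unfolding sim_char by simp
  have c2: "\<forall>k<length G + length D. (take k (G@D), (G@D)!k, (G'@D')!k) \<in> Ceq"
    using h2 unfolding sim_char by simp
  show ?thesis unfolding sim_char
  proof (intro conjI allI impI)
    show "length (G @ [T] @ wkLs eta rho (length G) D) = length (G' @ [T'] @ wkLs eta rho (length G') D')"
      using lG lD by simp
  next
    fix k assume k: "k < length (G @ [T] @ wkLs eta rho (length G) D)"
    show "(take k (G @ [T] @ wkLs eta rho (length G) D), (G @ [T] @ wkLs eta rho (length G) D) ! k,
           (G' @ [T'] @ wkLs eta rho (length G') D') ! k) \<in> Ceq"
    proof (cases "k \<le> length G")
      case True
      have "take k (G @ [T] @ wkLs eta rho (length G) D) = take k (G@[T])"
        using True by simp
      moreover have "(G @ [T] @ wkLs eta rho (length G) D) ! k = (G@[T])!k"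
        using True by (simp add: nth_append)
      moreover have "(G' @ [T'] @ wkLs eta rho (length G') D') ! k = (G'@[T'])!k"
        using True lG by (simp add: nth_append)
      ultimately show ?thesis using c1 True by auto
    next
      case False
      define j where "j = k - Suc (length G)"
      have kj: "k = Suc (length G) + j" using False unfolding j_def by simp
      have j: "j < length D" using k kj by simp
      have "(G @ take j D, D!j, D'!j) \<in> Ceq"
        using c2[rule_format, of "length G + j"] j lG by (simp add: nth_append)
      from e5a[OF TC this] j
      have "(G @ [T] @ wkLs eta rho (length G) (take j D), wkL eta rho (length G) (length G + j) (D!j),
             wkL eta rho (length G) (length G + j) (D'!j)) \<in> Ceq" by (simp add: min_def)
      then show ?thesis using kj j lG lD by (simp add: nth_append wkLs_take)
    qed
  qed
qed


lemma simS:
  assumes h1: "ctx_sim Ceq (G @ [S]) (G' @ [S'])" and ht: "(G, S, s, s') \<in> Cteq"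
    and h2: "ctx_sim Ceq (G @ [S] @ D) (G' @ [S'] @ D')"
  shows "ctx_sim Ceq (G @ substLs eta bnd rho (length G) s D) (G' @ substLs eta bnd rho (length G') s' D')"
proof -
  have lG: "length G' = length G" using sim_len[OF h1] by simp
  have lD: "length D' = length D" using sim_len[OF h2] lG by simp
  have sC: "(G, S, s) \<in> Ct" using e3a[OF ht] .
  have c1: "\<forall>k<Suc (length G). (take k (G@[S]), (G@[S])!k, (G'@[S'])!k) \<in> Ceq"
    using h1 unfolding sim_char by simp
  have c2: "\<forall>k<Suc (length G) + length D. (take k (G@[S]@D), (G@[S]@D)!k, (G'@[S']@D')!k) \<in> Ceq"
    using h2 unfolding sim_char by simp
  show ?thesis unfolding sim_char
  proof (intro conjI allI impI)
    show "length (G @ substLs eta bnd rho (length G) s D) = length (G' @ substLs eta bnd rho (length G') s' D')"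
      using lG lD by simp
  next
    fix k assume k: "k < length (G @ substLs eta bnd rho (length G) s D)"
    show "(take k (G @ substLs eta bnd rho (length G) s D), (G @ substLs eta bnd rho (length G) s D) ! k,
           (G' @ substLs eta bnd rho (length G') s' D') ! k) \<in> Ceq"
    proof (cases "k < length G")
      case True
      have "(take k G, G!k, G'!k) \<in> Ceq"
        using c1[rule_format, of k] True lG by (simp add: nth_append)
      then show ?thesis using True lG by (simp add: nth_append)
    next
      case False
      define j where "j = k - length G"
      have kj: "k = length G + j" using False unfolding j_def by simp
      have j: "j < length D" using k kj by simp
      have e: "(G @ [S] @ take j D, D!j, D'!j) \<in> Ceq"
        using c2[rule_format, of "Suc (length G) + j"] j lG by (simp add: nth_append)
      from e6a[of G S "take j D", OF _ sC] e j
      have a: "(G @ substLs eta bnd rho (length G) s (take j D), substL eta bnd rho (length G) s (Suc (length G) + j) (D!j),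
             substL eta bnd rho (length G) s (Suc (length G) + j) (D'!j)) \<in> Ceq" by (simp add: min_def)
      have "G @ [S] @ take j D @ [D'!j] \<in> C" using e2a[OF e2c[OF e]] by simp
      from e7a[OF this ht] j
      have b: "(G @ substLs eta bnd rho (length G) s (take j D), substL eta bnd rho (length G) s (Suc (length G) + j) (D'!j),
             substL eta bnd rho (length G) s' (Suc (length G) + j) (D'!j)) \<in> Ceq" by (simp add: min_def)
      from e2d[OF a b] show ?thesis using kj j lG lD by (simp add: nth_append substLs_take)
    qed
  qed
qed


lemma tm_sym: "tm_rel C Ct Ceq Cteq J J' \<Longrightarrow> tm_rel C Ct Ceq Cteq J' J"
proof -
  assume a: "tm_rel C Ct Ceq Cteq J J'"
  obtain G S x where J: "J = (G, S, x)" by (cases J) auto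
  obtain G' S' x' where J': "J' = (G', S', x')" by (cases J') auto
  from a have h: "ctx_sim Ceq (G @ [S]) (G' @ [S'])" and t: "(G, S, x, x') \<in> Cteq"
    unfolding J J' tm_rel_iff by auto
  then have s: "ctx_sim Ceq G G'" and e: "(G, S, S') \<in> Ceq" by auto
  have s': "ctx_sim Ceq G' G" using sim_sym[OF s] .
  have "(G', S, x', x) \<in> Cteq" using transp_teq[OF s', of "[]"] e3c[OF t] by simp
  moreover have "(G', S, S') \<in> Ceq" using transp_eq[OF s', of "[]"] e by simp
  ultimately have "(G', S', x', x) \<in> Cteq" using e4c by blast
  then show ?thesis unfolding J J' tm_rel_iff using sim_sym[OF h] by simp
qed

lemma tm_trans: "tm_rel C Ct Ceq Cteq J J' \<Longrightarrow> tm_rel C Ct Ceq Cteq J' J'' \<Longrightarrow> tm_rel C Ct Ceq Cteq J J''"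
proof -
  assume a: "tm_rel C Ct Ceq Cteq J J'" and b: "tm_rel C Ct Ceq Cteq J' J''"
  obtain G S x where J: "J = (G, S, x)" by (cases J) auto
  obtain G' S' x' where J': "J' = (G', S', x')" by (cases J') auto
  obtain G'' S'' x'' where J'': "J'' = (G'', S'', x'')" by (cases J'') auto
  from a have h: "ctx_sim Ceq (G @ [S]) (G' @ [S'])" and t: "(G, S, x, x') \<in> Cteq"
    unfolding J J' tm_rel_iff by auto
  from b have h2: "ctx_sim Ceq (G' @ [S']) (G'' @ [S''])" and t2: "(G', S', x', x'') \<in> Cteq"
    unfolding J'' J' tm_rel_iff by auto
  from h have s: "ctx_sim Ceq G G'" and e: "(G, S, S') \<in> Ceq" by auto
  have "(G, S', x', x'') \<in> Cteq" using transp_teq[OF s, of "[]"] t2 by simp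
  then have "(G, S, x', x'') \<in> Cteq" using e4c e2c[OF e] by blast
  then have "(G, S, x, x'') \<in> Cteq" using e3d t by blast
  then show ?thesis unfolding J J'' tm_rel_iff using sim_trans[OF h h2] by simp
qed


lemma regcong: "regular_congruence eta bnd rho C Ct (ctx_rel C Ceq) (tm_rel C Ct Ceq Cteq)"
  unfolding regular_congruence_def
proof (intro conjI allI impI)
  show "equiv C {(G, G'). ctx_rel C Ceq G G'}"
    unfolding equiv_def refl_on_def sym_def trans_def
  proof (intro conjI allI impI ballI)
    show "{(G, G'). ctx_rel C Ceq G G'} \<subseteq> C \<times> C" by (auto simp: ctx_rel_def)
  next
    fix x assume "x \<in> C" then show "(x, x) \<in> {(G, G'). ctx_rel C Ceq G G'}"
      using sim_refl by (simp add: ctx_rel_def)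
  next
    fix x y assume "(x, y) \<in> {(G, G'). ctx_rel C Ceq G G'}"
    then show "(y, x) \<in> {(G, G'). ctx_rel C Ceq G G'}" using sim_sym by (simp add: ctx_rel_iff)
  next
    fix x y z assume "(x, y) \<in> {(G, G'). ctx_rel C Ceq G G'}" "(y, z) \<in> {(G, G'). ctx_rel C Ceq G G'}"
    then show "(x, z) \<in> {(G, G'). ctx_rel C Ceq G G'}" using sim_trans by (simp add: ctx_rel_iff)
  qed
next
  show "equiv Ct {(J, J'). tm_rel C Ct Ceq Cteq J J'}"
    unfolding equiv_def refl_on_def sym_def trans_def
  proof (intro conjI allI impI ballI)
    show "{(J, J'). tm_rel C Ct Ceq Cteq J J'} \<subseteq> Ct \<times> Ct" by (auto simp: tm_rel_def)
  next
    fix J assume "J \<in> Ct"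
    then show "(J, J) \<in> {(J, J'). tm_rel C Ct Ceq Cteq J J'}"
    proof (cases J)
      case (fields G S x)
      have "ctx_sim Ceq (G @ [S]) (G @ [S])" using sim_refl Ct_C \<open>J \<in> Ct\<close> fields by blast
      moreover have "(G, S, x, x) \<in> Cteq" using e3b \<open>J \<in> Ct\<close> fields by blast
      ultimately show ?thesis using fields tm_rel_iff by simp
    qed
  next
    fix x y assume "(x, y) \<in> {(J, J'). tm_rel C Ct Ceq Cteq J J'}"
    then show "(y, x) \<in> {(J, J'). tm_rel C Ct Ceq Cteq J J'}" using tm_sym by simp
  next
    fix x y z assume "(x, y) \<in> {(J, J'). tm_rel C Ct Ceq Cteq J J'}" "(y, z) \<in> {(J, J'). tm_rel C Ct Ceq Cteq J J'}"
    then show "(x, z) \<in> {(J, J'). tm_rel C Ct Ceq Cteq J J'}" using tm_trans by simp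
  qed
next
  fix G G' assume a: "ctx_rel C Ceq G G'"
  then have s: "ctx_sim Ceq G G'" by (simp add: ctx_rel_iff)
  show "length G = length G'" using sim_len[OF s] .
  show "ctx_rel C Ceq (butlast G) (butlast G')"
    unfolding ctx_rel_iff
  proof (cases G rule: rev_cases)
    case Nil then show "ctx_sim Ceq (butlast G) (butlast G')" using s by simp
  next
    case (snoc Y a)
    then obtain Y' a' where "G' = Y' @ [a']" using s by (cases G' rule: rev_cases) auto
    then show "ctx_sim Ceq (butlast G) (butlast G')" using s snoc by simp
  qed
next
  fix J J' assume "tm_rel C Ct Ceq Cteq J J'"
  then show "ctx_rel C Ceq (bdry J) (bdry J')" by (simp add: tm_rel_def)
next
  fix G T G' assume a: "G @ [T] \<in> C" "G' \<in> C" "ctx_rel C Ceq G G'"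
  have s: "ctx_sim Ceq G G'" using a by (simp add: ctx_rel_iff)
  have e: "(G, T, T) \<in> Ceq" using e2b[OF a(1)] .
  have "(G', T, T) \<in> Ceq" using transp_eq[OF sim_sym[OF s], of "[]"] e by simp
  then have "G' @ [T] \<in> C" by (rule e2a)
  moreover have "ctx_rel C Ceq (G @ [T]) (G' @ [T])" using s e by (simp add: ctx_rel_iff)
  ultimately show "\<exists>T'. G' @ [T'] \<in> C \<and> ctx_rel C Ceq (G @ [T]) (G' @ [T'])" by blast
next
  fix J F assume a: "J \<in> Ct" "F \<in> C" "ctx_rel C Ceq (bdry J) F"
  obtain G S x where J: "J = (G, S, x)" by (cases J) auto
  have s: "ctx_sim Ceq (G @ [S]) F" using a J by (simp add: ctx_rel_iff bdry_def)
  obtain G' S' where F: "F = G' @ [S']" using s by (cases F rule: rev_cases) auto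
  have "tm_rel C Ct Ceq Cteq J (G', S', x)"
    unfolding J tm_rel_iff using s F e3b a(1) J by simp
  then show "\<exists>J'. J' \<in> Ct \<and> bdry J' = F \<and> tm_rel C Ct Ceq Cteq J J'"
    by (intro exI[of _ "(G', S', x)"]) (auto simp: tm_rel_def bdry_def F)
next
  fix G T D G' T' D'
  assume "ctx_rel C Ceq (G @ [T]) (G' @ [T'])" "ctx_rel C Ceq (G @ D) (G' @ D')"
  then show "ctx_rel C Ceq (opT eta rho G T D) (opT eta rho G' T' D')"
    unfolding ctx_rel_iff opT_def by (rule simT)
next
  fix G T D R r G' T' D' R' r'
  assume a: "ctx_rel C Ceq (G @ [T]) (G' @ [T'])" "tm_rel C Ct Ceq Cteq (G @ D, R, r) (G' @ D', R', r')"
  have h1: "ctx_sim Ceq (G @ [T]) (G' @ [T'])" using a by (simp add: ctx_rel_iff)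
  have h2: "ctx_sim Ceq (G @ D @ [R]) (G' @ D' @ [R'])" and t: "(G @ D, R, r, r') \<in> Cteq"
    using a by (auto simp: tm_rel_iff simp del: sim_snoc)
  have lG: "length G' = length G" using sim_len[OF h1] by simp
  have lD: "length D' = length D" using sim_len[OF h2] lG by simp
  have "ctx_sim Ceq (G @ [T] @ wkLs eta rho (length G) (D @ [R])) (G' @ [T'] @ wkLs eta rho (length G') (D' @ [R']))"
    using simT[OF h1, of "D @ [R]" "D' @ [R']"] h2 by simp
  moreover have "(G @ [T] @ wkLs eta rho (length G) D, wkL eta rho (length G) (length G + length D) R,
         wkR eta bnd (length G) (length G + length D) r, wkR eta bnd (length G) (length G + length D) r') \<in> Cteq"
    using e5b[OF sim_C[OF h1] t] .
  ultimately show "tm_rel C Ct Ceq Cteq (opTt eta bnd rho G T D R r) (opTt eta bnd rho G' T' D' R' r')"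
    unfolding opTt_def tm_rel_iff using lG lD by (simp add: wkLs_snoc)
next
  fix G S s D G' S' s' D'
  assume a: "tm_rel C Ct Ceq Cteq (G, S, s) (G', S', s')" "ctx_rel C Ceq (G @ [S] @ D) (G' @ [S'] @ D')"
  then show "ctx_rel C Ceq (opS eta bnd rho G s D) (opS eta bnd rho G' s' D')"
    unfolding ctx_rel_iff opS_def tm_rel_iff using simS by blast
next
  fix G S s D R r G' S' s' D' R' r'
  assume a: "tm_rel C Ct Ceq Cteq (G, S, s) (G', S', s')"
     "tm_rel C Ct Ceq Cteq (G @ [S] @ D, R, r) (G' @ [S'] @ D', R', r')"
  have h1: "ctx_sim Ceq (G @ [S]) (G' @ [S'])" and ts: "(G, S, s, s') \<in> Cteq"
    using a(1) by (auto simp: tm_rel_iff simp del: sim_snoc)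
  have h2: "ctx_sim Ceq (G @ [S] @ D @ [R]) (G' @ [S'] @ D' @ [R'])" and t: "(G @ [S] @ D, R, r, r') \<in> Cteq"
    using a(2) by (auto simp: tm_rel_iff simp del: sim_snoc)
  have lG: "length G' = length G" using sim_len[OF h1] by simp
  have lD: "length D' = length D" using sim_len[OF h2] lG by simp
  have "ctx_sim Ceq (G @ substLs eta bnd rho (length G) s (D @ [R])) (G' @ substLs eta bnd rho (length G') s' (D' @ [R']))"
    using simS[OF h1 ts, of "D @ [R]" "D' @ [R']"] h2 by simp
  moreover
  have sC: "(G, S, s) \<in> Ct" using e3a[OF ts] .
  have x1: "(G @ substLs eta bnd rho (length G) s D, substL eta bnd rho (length G) s (Suc (length G) + length D) R,
         substR eta bnd (length G) s (Suc (length G) + length D) r,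
         substR eta bnd (length G) s (Suc (length G) + length D) r') \<in> Cteq"
    using e6b[OF t sC] .
  have "(G @ [S] @ D, R, r') \<in> Ct" using e3a[OF e3c[OF t]] .
  from e7b[OF this ts]
  have x2: "(G @ substLs eta bnd rho (length G) s D, substL eta bnd rho (length G) s (Suc (length G) + length D) R,
         substR eta bnd (length G) s (Suc (length G) + length D) r',
         substR eta bnd (length G) s' (Suc (length G) + length D) r') \<in> Cteq" .
  note e3d[OF x1 x2]
  ultimately show "tm_rel C Ct Ceq Cteq (opSt eta bnd rho G s D R r) (opSt eta bnd rho G' s' D' R' r')"
    unfolding opSt_def tm_rel_iff using lG lD by (simp add: substLs_snoc)
next
  fix G T G' T'
  assume a: "ctx_rel C Ceq (G @ [T]) (G' @ [T'])"
  have h1: "ctx_sim Ceq (G @ [T]) (G' @ [T'])" using a by (simp add: ctx_rel_iff)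
  have lG: "length G' = length G" using sim_len[OF h1] by simp
  have "ctx_sim Ceq (G @ [T] @ wkLs eta rho (length G) [T]) (G' @ [T'] @ wkLs eta rho (length G') [T'])"
    using simT[OF h1 h1] by simp
  moreover have "(G @ [T], wkL eta rho (length G) (length G) T, eta (Suc (length G)) (Suc (length G)),
      eta (Suc (length G)) (Suc (length G))) \<in> Cteq"
    using e3b[OF c16[OF sim_C[OF h1]]] .
  ultimately show "tm_rel C Ct Ceq Cteq (opdelta eta rho G T) (opdelta eta rho G' T')"
    unfolding opdelta_def tm_rel_iff using lG by (simp add: wkLs_def)
qed

end

theorem proposition6p2:
  fixes RR :: "nat \<Rightarrow> 'r set"
    and eta :: "nat \<Rightarrow> nat \<Rightarrow> 'r"
    and bnd :: "nat \<Rightarrow> nat \<Rightarrow> (nat \<Rightarrow> 'r) \<Rightarrow> 'r \<Rightarrow> 'r"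
    and LL :: "nat \<Rightarrow> 'l set"
    and rho :: "nat \<Rightarrow> nat \<Rightarrow> (nat \<Rightarrow> 'r) \<Rightarrow> 'l \<Rightarrow> 'l"
    and C :: "'l list set"
    and Ct :: "('l list \<times> 'l \<times> 'r) set"
    and Ceq :: "('l list \<times> 'l \<times> 'l) set"
    and Cteq :: "('l list \<times> 'l \<times> 'r \<times> 'r) set"
  assumes "fin_monad RR eta bnd"
    and "fin_lmodule RR eta bnd LL rho"
    and "judgement_sets_typed RR LL C Ct Ceq Cteq"
    and "cond1 RR eta bnd LL rho C Ct"
    and "cond2 C Ceq"
    and "cond3 Ct Cteq"
    and "cond4 Ceq Cteq"
    and "cond5 eta bnd rho C Ceq Cteq"
    and "cond6 eta bnd rho Ct Ceq Cteq"
    and "cond7 eta bnd rho C Ct Ceq Cteq"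
  shows "regular_congruence eta bnd rho C Ct (ctx_rel C Ceq) (tm_rel C Ct Ceq Cteq)"
proof -
  interpret sys RR eta bnd LL rho C Ct Ceq Cteq
    by (unfold_locales; fact assms)
  show ?thesis by (rule regcong)
qed

end
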